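(* Let $p$ be a polynomial of degree $m$ with $p(t)=dt^m+O(t^{m-1})$, let $q$ be a polynomial of degree $d\ge1$ with $q(t)=t^d+O(t^{d-1})$, let $c\in\mathbb{C}$, $g(z)=\int_0^zp(t)e^{q(t)}dt+c$, suppose $g$ is not of the form $\tilde p e^{\tilde q}$ with polynomials $\tilde p,\tilde q$, let $f(z)=z-g(z)/g'(z)$, and suppose each zero of $g''$ that is not a zero of $g$ or $g'$ is attracted by a periodic cycle of $f$. Then there is $\rho>0$ such that every zero $z_0$ of $g$ which is not a zero of $g'$ and satisfies $|z_0|>\rho$ has $$\mathcal{A}^*(z_0)\supset D\Big(z_0,\frac{1}{3d|z_0|^{d-1}}\Big).$$
   Context: A zero $z_0$ of $g$ that is not a zero of $g'$ is a superattracting fixed point of $f$; $\mathcal{A}^*(z_0)$ denotes its immediate basin of attraction, i.e. the component of the Fatou set of $f$ containing $z_0$. $D(z_0,r)$ is the open disk. *)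

theory Defs
  imports "HOL-Complex_Analysis.Complex_Analysis" "HOL-Computational_Algebra.Polynomial"
begin

text \<open>Newton map of g on the extended plane: None represents the point at infinity.
  Poles of f = z - g/g' are the zeros of g' which are not zeros of g.  At common zeros of
  g and g' the singularity of g/g' is removable with value 0, which agrees with the value
  z - g z / 0 = z computed below.\<close>
definition newton_ext :: "(complex \<Rightarrow> complex) \<Rightarrow> complex \<Rightarrow> complex option" where
  "newton_ext g z = (if deriv g z = 0 \<and> g z \<noteq> 0 then None else Some (z - g z / deriv g z))"

primrec iter :: "(complex \<Rightarrow> complex option) \<Rightarrow> nat \<Rightarrow> complex \<Rightarrow> complex option" where
  "iter F 0 z = Some z"
| "iter F (Suc n) z = Option.bind (iter F n z) F"

definition normal_family :: "complex set \<Rightarrow> (nat \<Rightarrow> complex \<Rightarrow> complex) \<Rightarrow> bool" where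
  "normal_family U fs \<longleftrightarrow>
     (\<forall>r::nat \<Rightarrow> nat. \<exists>s. strict_mono s \<and>
        ((\<exists>h. \<forall>K. compact K \<and> K \<subseteq> U \<longrightarrow> uniform_limit K (\<lambda>k. fs (r (s k))) h sequentially)
         \<or> (\<forall>K. compact K \<and> K \<subseteq> U \<longrightarrow>
              (\<forall>M::real. eventually (\<lambda>k. \<forall>w\<in>K. M < norm (fs (r (s k)) w)) sequentially))))"

definition fatou_set :: "(complex \<Rightarrow> complex option) \<Rightarrow> complex set" where
  "fatou_set F = {z. \<exists>U. open U \<and> z \<in> U \<and> (\<forall>n. \<forall>w\<in>U. iter F n w \<noteq> None)
                     \<and> normal_family U (\<lambda>n w. the (iter F n w))}"

definition immediate_basin :: "(complex \<Rightarrow> complex option) \<Rightarrow> complex \<Rightarrow> complex set" where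
  "immediate_basin F z0 = connected_component_set (fatou_set F) z0"

definition attracted_by_cycle :: "(complex \<Rightarrow> complex option) \<Rightarrow> complex \<Rightarrow> bool" where
  "attracted_by_cycle F z \<longleftrightarrow>
     (\<exists>xi k. k \<ge> 1 \<and> iter F k xi = Some xi \<and> (\<forall>n. iter F n z \<noteq> None) \<and>
        (\<lambda>n. the (iter F (n * k) z)) \<longlonglongrightarrow> xi)"

end

theory Submission imports Defs begin

lemma pow_diff_bound:
  fixes z0 xi :: complex and n :: nat
  assumes "norm z0 \<ge> 1" "norm (xi - z0) \<le> 1"
  shows "norm (xi ^ n - z0 ^ n) * norm z0 \<le> real n * 2 ^ n * norm z0 ^ n"
proof -
  let ?B = "real n * (2 * norm z0) ^ (n - 1)"
  have b: "norm (xi ^ n - z0 ^ n) \<le> ?B * norm (xi - z0)"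
  proof (rule field_differentiable_bound[of "cball z0 1" "\<lambda>x. x ^ n" "\<lambda>x. of_nat n * x ^ (n - 1)"])
    show "convex (cball z0 1)" by simp
    show "((\<lambda>x. x ^ n) has_field_derivative of_nat n * x ^ (n - 1)) (at x within cball z0 1)" for x
      by (rule DERIV_subset[OF _ subset_UNIV]) (auto intro!: derivative_eq_intros)
    show "norm (of_nat n * x ^ (n - 1)) \<le> ?B" if "x \<in> cball z0 1" for x
    proof -
      have "norm x \<le> norm z0 + 1" using that norm_triangle_sub[of x z0]
        by (simp add: dist_norm norm_minus_commute)
      also have "\<dots> \<le> 2 * norm z0" using assms by simp
      finally have "norm x ^ (n - 1) \<le> (2 * norm z0) ^ (n - 1)"
        by (intro power_mono) auto
      then show ?thesis by (simp add: norm_mult norm_power mult_left_mono)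
    qed
    show "xi \<in> cball z0 1" using assms by (simp add: dist_norm norm_minus_commute)
    show "z0 \<in> cball z0 1" by simp
  qed
  show ?thesis
  proof (cases n)
    case 0 then show ?thesis by simp
  next
    case (Suc k)
    have "norm (xi ^ n - z0 ^ n) * norm z0 \<le> ?B * norm (xi - z0) * norm z0"
      using b by (intro mult_right_mono) auto
    also have "\<dots> \<le> ?B * norm z0"
      using assms by (intro mult_right_mono) (auto intro: mult_left_le)
    also have "\<dots> = real n * 2 ^ k * norm z0 ^ n" using Suc by (simp add: power_mult_distrib)
    also have "\<dots> \<le> real n * 2 ^ n * norm z0 ^ n" using Suc by (intro mult_right_mono mult_left_mono) auto
    finally show ?thesis .
  qed
qed

lemma poly_near:
  fixes P :: "complex poly"
  shows "\<exists>K\<ge>0. \<forall>z0 xi. norm z0 \<ge> 1 \<longrightarrow> norm (xi - z0) \<le> 1 \<longrightarrow>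
           norm (poly P xi - lead_coeff P * z0 ^ degree P) * norm z0 \<le> K * norm z0 ^ degree P"
proof -
  define n where "n = degree P"
  define K where "K = (\<Sum>i<n. norm (coeff P i)) * 2 ^ n + norm (lead_coeff P) * real n * 2 ^ n"
  have K0: "K \<ge> 0" unfolding K_def by (intro add_nonneg_nonneg mult_nonneg_nonneg sum_nonneg) auto
  have "norm (poly P xi - lead_coeff P * z0 ^ n) * norm z0 \<le> K * norm z0 ^ n"
    if z0: "norm z0 \<ge> 1" and xi: "norm (xi - z0) \<le> 1" for z0 xi
  proof -
    have xn: "norm xi \<le> 2 * norm z0"
      using norm_triangle_sub[of xi z0] xi z0 by (simp add: norm_minus_commute)
    have "poly P xi = (\<Sum>i<Suc n. coeff P i * xi ^ i)"
      by (simp add: poly_altdef n_def lessThan_Suc_atMost)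
    also have "\<dots> = (\<Sum>i<n. coeff P i * xi ^ i) + lead_coeff P * xi ^ n"
      by (simp add: n_def)
    finally have eq: "poly P xi - lead_coeff P * z0 ^ n =
        (\<Sum>i<n. coeff P i * xi ^ i) + lead_coeff P * (xi ^ n - z0 ^ n)"
      by (simp add: algebra_simps)
    have s1: "norm (\<Sum>i<n. coeff P i * xi ^ i) * norm z0 \<le> (\<Sum>i<n. norm (coeff P i)) * 2 ^ n * norm z0 ^ n"
    proof -
      have "norm (\<Sum>i<n. coeff P i * xi ^ i) * norm z0 \<le> (\<Sum>i<n. norm (coeff P i) * norm xi ^ i) * norm z0"
        by (intro mult_right_mono order.trans[OF norm_sum]) (auto simp: norm_mult norm_power)
      also have "\<dots> = (\<Sum>i<n. norm (coeff P i) * (norm xi ^ i * norm z0))"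
        by (simp add: sum_distrib_right mult.assoc)
      also have "\<dots> \<le> (\<Sum>i<n. norm (coeff P i) * (2 ^ n * norm z0 ^ n))"
      proof (intro sum_mono mult_left_mono)
        fix i assume "i \<in> {..<n}"
        then have i: "Suc i \<le> n" by simp
        have "norm xi ^ i \<le> (2 * norm z0) ^ i" by (intro power_mono xn) auto
        then have "norm xi ^ i * norm z0 \<le> (2 * norm z0) ^ i * norm z0"
          by (intro mult_right_mono) auto
        also have "\<dots> = 2 ^ i * norm z0 ^ Suc i" by (simp add: power_mult_distrib)
        also have "\<dots> \<le> 2 ^ n * norm z0 ^ n"
          using i z0 by (intro mult_mono power_increasing) auto
        finally show "norm xi ^ i * norm z0 \<le> 2 ^ n * norm z0 ^ n" .
      qed auto
      also have "\<dots> = (\<Sum>i<n. norm (coeff P i)) * 2 ^ n * norm z0 ^ n"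
        by (simp add: sum_distrib_right mult.assoc)
      finally show ?thesis .
    qed
    have s2: "norm (lead_coeff P * (xi ^ n - z0 ^ n)) * norm z0 \<le> norm (lead_coeff P) * real n * 2 ^ n * norm z0 ^ n"
      using pow_diff_bound[OF z0 xi, of n] by (simp add: norm_mult mult.assoc mult_left_mono)
    have "norm (poly P xi - lead_coeff P * z0 ^ n) * norm z0 \<le>
       norm (\<Sum>i<n. coeff P i * xi ^ i) * norm z0 + norm (lead_coeff P * (xi ^ n - z0 ^ n)) * norm z0"
      unfolding eq distrib_right[symmetric] by (intro mult_right_mono norm_triangle_ineq) auto
    also have "\<dots> \<le> K * norm z0 ^ n" using s1 s2 unfolding K_def by (simp add: distrib_right)
    finally show ?thesis .
  qed
  with K0 show ?thesis unfolding n_def by blast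
qed


lemma nat_seq_subseq:
  fixes rr :: "nat \<Rightarrow> nat"
  shows "\<exists>s. strict_mono s \<and> ((\<exists>N. \<forall>k. rr (s k) = N) \<or> filterlim (\<lambda>k. rr (s k)) at_top sequentially)"
proof (cases "\<exists>N. infinite {k. rr k = N}")
  case True
  then obtain N where inf: "infinite {k. rr k = N}" by blast
  define s where "s = enumerate {k. rr k = N}"
  have "strict_mono s" unfolding s_def by (rule strict_mono_enumerate[OF inf])
  moreover have "\<forall>k. rr (s k) = N" using enumerate_in_set[OF inf] unfolding s_def by blast
  ultimately show ?thesis by blast
next
  case False
  have "filterlim rr at_top sequentially"
    unfolding filterlim_at_top
  proof
    fix Z
    have eq: "{k. rr k < Z} = (\<Union>N<Z. {k. rr k = N})" by auto
    have "\<forall>N. finite {k. rr k = N}" using False by blast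
    then have "finite {k. rr k < Z}" unfolding eq by (intro finite_UN_I) auto
    then obtain M where M0: "\<forall>k\<in>{k. rr k < Z}. k \<le> M"
      unfolding finite_nat_set_iff_bounded_le by (elim exE) 
    have M: "k \<le> M" if "rr k < Z" for k using M0 that by simp
    show "eventually (\<lambda>k. Z \<le> rr k) sequentially"
      unfolding eventually_sequentially
    proof (intro exI allI impI)
      fix k assume "Suc M \<le> k"
      then show "Z \<le> rr k" using M[of k] by (cases "rr k < Z") simp_all
    qed
  qed
  then show ?thesis by (intro exI[of _ id]) (auto simp: strict_mono_def)
qed

lemma basin_from_contraction:
  fixes F :: "complex \<Rightarrow> complex option" and N :: "complex \<Rightarrow> complex"
  assumes r: "r > 0"
    and FN: "\<And>z. z \<in> ball z0 r \<Longrightarrow> F z = Some (N z)"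
    and contr: "\<And>z. z \<in> ball z0 r \<Longrightarrow> norm (N z - z0) \<le> (9/10) * norm (z - z0)"
  shows "ball z0 r \<subseteq> immediate_basin F z0"
proof -
  have inball: "y \<in> ball z0 r \<longleftrightarrow> norm (y - z0) < r" for y
    by (simp add: dist_norm norm_minus_commute)
  have iterN: "iter F n z = Some ((N^^n) z) \<and> norm ((N^^n) z - z0) \<le> (9/10)^n * norm (z - z0)"
    if z: "z \<in> ball z0 r" for n z
  proof (induction n)
    case 0 then show ?case by simp
  next
    case (Suc n)
    define y where "y = (N^^n) z"
    have yb: "norm (y - z0) \<le> (9/10)^n * norm (z - z0)" using Suc y_def by simp
    also have "\<dots> \<le> norm (z - z0)" by (intro mult_left_le_one_le) (auto simp: power_le_one)
    finally have "y \<in> ball z0 r" using z inball by auto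
    then have "F y = Some (N y)" "norm (N y - z0) \<le> (9/10) * norm (y - z0)" using FN contr by auto
    moreover have "(9/10) * norm (y - z0) \<le> (9/10) * ((9/10)^n * norm (z - z0))"
      using yb by simp
    moreover have "iter F (Suc n) z = F y" using Suc.IH y_def by simp
    moreover have "(N^^Suc n) z = N y" using y_def by simp
    ultimately show ?case by (simp add: mult.assoc)
  qed
  have bnd: "norm ((N^^n) z - z0) \<le> (9/10)^n * r" if "z \<in> ball z0 r" for n z
  proof -
    have "(9/10::real)^n * norm (z - z0) \<le> (9/10)^n * r"
      using that inball[of z] by (intro mult_left_mono) auto
    then show ?thesis using iterN[OF that, of n] by linarith
  qed
  have nf: "normal_family (ball z0 r) (\<lambda>n w. the (iter F n w))"
    unfolding normal_family_def
  proof
    fix rr :: "nat \<Rightarrow> nat"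
    obtain s where s: "strict_mono s"
      and cases: "(\<exists>N. \<forall>k. rr (s k) = N) \<or> filterlim (\<lambda>k. rr (s k)) at_top sequentially"
      using nat_seq_subseq[of rr] by blast
    have hh: "\<exists>h. \<forall>K. compact K \<and> K \<subseteq> ball z0 r \<longrightarrow>
            uniform_limit K (\<lambda>k w. the (iter F (rr (s k)) w)) h sequentially"
    proof (cases "\<exists>N. \<forall>k. rr (s k) = N")
      case True
      then obtain M where M: "\<And>k. rr (s k) = M" by blast
      show ?thesis
        by (intro exI[of _ "\<lambda>w. the (iter F M w)"]) (simp add: M uniform_limit_const)
    next
      case False
      with cases have lim: "filterlim (\<lambda>k. rr (s k)) at_top sequentially" by blast
      show ?thesis
      proof (intro exI[of _ "\<lambda>_. z0"] allI impI)
        fix K assume K: "compact K \<and> K \<subseteq> ball z0 r"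
        show "uniform_limit K (\<lambda>k w. the (iter F (rr (s k)) w)) (\<lambda>_. z0) sequentially"
          unfolding uniform_limit_iff
        proof (intro allI impI)
          fix e :: real assume e: "e > 0"
          have "(\<lambda>n. (9/10::real)^n * r) \<longlonglongrightarrow> 0 * r"
            by (intro tendsto_mult_right LIMSEQ_power_zero) auto
          then have "eventually (\<lambda>n. (9/10::real)^n * r < e) sequentially"
            using e by (simp add: order_tendsto_iff)
          then have ev: "eventually (\<lambda>k. (9/10::real)^(rr (s k)) * r < e) sequentially"
            using lim unfolding filterlim_iff by blast
          show "eventually (\<lambda>k. \<forall>w\<in>K. dist (the (iter F (rr (s k)) w)) z0 < e) sequentially"
          proof (rule eventually_mono[OF ev], intro ballI)
            fix k w assume k: "(9/10::real)^(rr (s k)) * r < e" and w: "w \<in> K"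
            then have wb: "w \<in> ball z0 r" using K by auto
            show "dist (the (iter F (rr (s k)) w)) z0 < e"
              using iterN[OF wb, of "rr (s k)"] bnd[OF wb, of "rr (s k)"] k
              by (simp add: dist_norm)
          qed
        qed
      qed
    qed
    show "\<exists>s. strict_mono s \<and>
         ((\<exists>h. \<forall>K. compact K \<and> K \<subseteq> ball z0 r \<longrightarrow> uniform_limit K (\<lambda>k w. the (iter F (rr (s k)) w)) h sequentially) \<or>
          (\<forall>K. compact K \<and> K \<subseteq> ball z0 r \<longrightarrow> (\<forall>M. \<forall>\<^sub>F k in sequentially. \<forall>w\<in>K. M < cmod (the (iter F (rr (s k)) w)))))"
      by (rule exI[of _ s], rule conjI[OF s], rule disjI1, rule hh)
  qed
  have fs: "ball z0 r \<subseteq> fatou_set F"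
  proof
    fix w assume w: "w \<in> ball z0 r"
    have "\<forall>n. \<forall>v\<in>ball z0 r. iter F n v \<noteq> None" using iterN by auto
    then show "w \<in> fatou_set F" unfolding fatou_set_def mem_Collect_eq
      by (intro exI[of _ "ball z0 r"] conjI) (simp_all only: w nf open_ball)
  qed
  have "z0 \<in> ball z0 r" using r by simp
  then show ?thesis unfolding immediate_basin_def
    by (rule connected_component_maximal[OF _ connected_ball fs])
qed


lemma exp_small:
  fixes u :: complex
  assumes "norm u \<le> 11/30"
  shows "norm (exp u) \<le> 8/5" "norm (exp u - 1) \<le> 8/5 * norm u"
proof -
  have eb: "norm (exp v) \<le> 8/5" if "norm v \<le> 11/30" for v :: complex
  proof -
    have "norm (exp v) = exp (Re v)" by simp
    also have "\<dots> \<le> exp (norm v)" by (simp add: complex_Re_le_cmod)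
    also have "\<dots> \<le> 1 + norm v + (norm v)^2" by (rule exp_bound) (use that in auto)
    also have "\<dots> \<le> 1 + 11/30 + (11/30)^2"
      using that by (intro add_mono power_mono) auto
    also have "\<dots> \<le> 8/5" by (simp add: power2_eq_square)
    finally show ?thesis .
  qed
  show "norm (exp u) \<le> 8/5" by (rule eb[OF assms])
  have "norm (exp u - exp 0) \<le> 8/5 * norm (u - 0)"
  proof (rule field_differentiable_bound[of "cball 0 (11/30)" exp exp])
    show "(exp has_field_derivative exp z) (at z within cball 0 (11 / 30))" for z :: complex
      by (rule DERIV_subset[OF DERIV_exp subset_UNIV])
    show "norm (exp z) \<le> 8/5" if "z \<in> cball 0 (11/30)" for z :: complex
      using that by (intro eb) simp
  qed (use assms in auto)
  then show "norm (exp u - 1) \<le> 8/5 * norm u" by simp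
qed

lemma key_ineq:
  fixes P0 P1 E u :: complex
  assumes e1: "norm (exp u) \<le> 8/5" and e2: "norm (exp u - 1) \<le> 88/150"
    and p: "norm (P1 - P0) \<le> (2/39) * norm P0"
  shows "norm (P0 * E - P1 * (E * exp u)) \<le> 9/10 * norm (P0 * E)"
proof -
  have eq: "P0 * E - P1 * (E * exp u) = E * (P0 * (1 - exp u) + (P0 - P1) * exp u)"
    by (simp add: algebra_simps)
  have "norm (P0 * (1 - exp u) + (P0 - P1) * exp u) \<le> norm P0 * norm (1 - exp u) + norm (P0 - P1) * norm (exp u)"
    by (metis norm_mult norm_triangle_ineq)
  also have "\<dots> \<le> norm P0 * (88/150) + ((2/39) * norm P0) * (8/5)"
    using e1 e2 p by (intro add_mono mult_mono) (auto simp: norm_minus_commute)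
  also have "\<dots> \<le> 9/10 * norm P0" by simp
  finally have "norm (P0 * (1 - exp u) + (P0 - P1) * exp u) \<le> 9/10 * norm P0" .
  then have "norm E * norm (P0 * (1 - exp u) + (P0 - P1) * exp u) \<le> norm E * (9/10 * norm P0)"
    by (intro mult_left_mono) auto
  then show ?thesis unfolding eq by (simp add: norm_mult mult_ac)
qed


theorem lemma7p4:
  fixes p q :: "complex poly" and c :: complex and g :: "complex \<Rightarrow> complex"
  assumes "degree q \<ge> 1"
    and "lead_coeff q = 1"
    and "lead_coeff p = of_nat (degree q)"
    and "g = (\<lambda>z. contour_integral (linepath 0 z) (\<lambda>t. poly p t * exp (poly q t)) + c)"
    and "\<not> (\<exists>pt qt :: complex poly. \<forall>z. g z = poly pt z * exp (poly qt z))"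
    and "\<forall>z. deriv (deriv g) z = 0 \<and> g z \<noteq> 0 \<and> deriv g z \<noteq> 0
             \<longrightarrow> attracted_by_cycle (newton_ext g) z"
  shows "\<exists>\<rho>>0. \<forall>z0. g z0 = 0 \<and> deriv g z0 \<noteq> 0 \<and> norm z0 > \<rho> \<longrightarrow>
           ball z0 (1 / (3 * real (degree q) * norm z0 ^ (degree q - 1)))
             \<subseteq> immediate_basin (newton_ext g) z0"
proof -
  define d where "d = degree q"
  define H where "H = (\<lambda>t. poly p t * exp (poly q t))"
  have d1: "d \<ge> 1" using assms(1) d_def by simp
  have holH: "H holomorphic_on UNIV" unfolding H_def by (intro holomorphic_intros)
  obtain G where G0: "\<And>x. x \<in> UNIV \<Longrightarrow> (G has_field_derivative H x) (at x within UNIV)"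
    using holomorphic_convex_primitive'[OF convex_UNIV open_UNIV holH] by blast
  have G: "(G has_field_derivative H x) (at x)" for x using G0[of x] by simp
  have gG: "g z = G z - G 0 + c" for z
  proof -
    have "(H has_contour_integral (G (pathfinish (linepath 0 z)) - G (pathstart (linepath 0 z)))) (linepath 0 z)"
      by (rule contour_integral_primitive[of UNIV, OF _ valid_path_linepath]) (auto simp: G)
    then have "contour_integral (linepath 0 z) H = G z - G 0"
      by (simp add: contour_integral_unique)
    then show ?thesis using assms(4) unfolding H_def by simp
  qed
  have gfun: "g = (\<lambda>z. G z - G 0 + c)" using gG by auto
  have gder: "(g has_field_derivative H z) (at z)" for z
    unfolding gfun by (auto intro!: derivative_eq_intros G)
  have dg: "deriv g z = H z" for z using gder DERIV_imp_deriv by blast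

  obtain Kq where Kq0: "Kq \<ge> 0" and Kq: "\<And>z0 xi. norm z0 \<ge> 1 \<Longrightarrow> norm (xi - z0) \<le> 1 \<Longrightarrow>
      norm (poly (pderiv q) xi - lead_coeff (pderiv q) * z0 ^ degree (pderiv q)) * norm z0
        \<le> Kq * norm z0 ^ degree (pderiv q)"
    using poly_near[of "pderiv q"] by blast
  obtain Kp where Kp0: "Kp \<ge> 0" and Kp: "\<And>z0 xi. norm z0 \<ge> 1 \<Longrightarrow> norm (xi - z0) \<le> 1 \<Longrightarrow>
      norm (poly p xi - lead_coeff p * z0 ^ degree p) * norm z0 \<le> Kp * norm z0 ^ degree p"
    using poly_near[of p] by blast
  have degq': "degree (pderiv q) = d - 1" by (simp add: degree_pderiv d_def)
  have leadq': "lead_coeff (pderiv q) = of_nat d"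
  proof -
    have "lead_coeff (pderiv q) = of_nat (Suc (d - 1)) * coeff q (Suc (d - 1))"
      by (simp add: degq' coeff_pderiv)
    also have "Suc (d - 1) = d" using d1 by simp
    finally show ?thesis using assms(2) d_def by simp
  qed
  have leadp: "lead_coeff p = of_nat d" using assms(3) d_def by simp
  define m where "m = degree p"
  define \<rho> where "\<rho> = 1 + 10 * Kq + 40 * Kp"
  show ?thesis
  proof (intro exI[of _ \<rho>] conjI allI impI)
    show "\<rho> > 0" unfolding \<rho>_def using Kq0 Kp0 by simp
    fix z0 assume asm: "g z0 = 0 \<and> deriv g z0 \<noteq> 0 \<and> norm z0 > \<rho>"
    then have gz0: "g z0 = 0" and big: "norm z0 > \<rho>" by auto
    define R where "R = norm z0"
    have R1: "R \<ge> 1" and RKq: "Kq \<le> R / 10" and RKp: "Kp \<le> R / 40"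
      using big Kq0 Kp0 unfolding R_def \<rho>_def by auto
    define A where "A = real d * R ^ (d - 1)"
    have "1 * R ^ (d - 1) \<le> real d * R ^ (d - 1)" using d1 R1 by (intro mult_right_mono) auto
    then have RA: "R ^ (d - 1) \<le> A" unfolding A_def by simp
    have A1: "A \<ge> 1" unfolding A_def using d1 R1
      by (metis mult_mono of_nat_1 of_nat_le_iff one_le_power mult_1_right zero_le_one le_numeral_extra(1) of_nat_0_le_iff)
    define r where "r = 1 / (3 * A)"
    have r0: "r > 0" and r1: "r \<le> 1/3" and rA: "r * A = 1/3"
      using A1 unfolding r_def by (auto simp: field_simps)
    have rad: "1 / (3 * real (degree q) * norm z0 ^ (degree q - 1)) = r"
      unfolding r_def A_def R_def d_def by (simp add: mult.assoc)
    have q'b: "norm (poly (pderiv q) xi) \<le> (11/10) * A" if xi: "norm (xi - z0) \<le> 1" for xi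
    proof -
      have "norm (poly (pderiv q) xi - of_nat d * z0^(d-1)) * R \<le> Kq * R^(d-1)"
        using Kq[OF _ xi] R1 degq' leadq' unfolding R_def by simp
      also have "\<dots> \<le> (R / 10) * R^(d-1)" using RKq R1 by (intro mult_right_mono) auto
      also have "\<dots> = (R^(d-1) / 10) * R" by simp
      finally have "norm (poly (pderiv q) xi - of_nat d * z0^(d-1)) * R \<le> (R^(d-1) / 10) * R" .
      then have "norm (poly (pderiv q) xi - of_nat d * z0^(d-1)) \<le> R^(d-1) / 10"
        by (rule mult_right_le_imp_le) (use R1 in simp)
      moreover have "norm (of_nat d * z0^(d-1) :: complex) = A"
        unfolding A_def R_def by (simp add: norm_mult norm_power)
      ultimately have "norm (poly (pderiv q) xi) \<le> A + R^(d-1) / 10"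
        using norm_triangle_sub[of "poly (pderiv q) xi" "of_nat d * z0^(d-1)"] by linarith
      then show ?thesis using RA by linarith
    qed
    define D where "D = real d * R ^ m"
    have D0: "D > 0" unfolding D_def using d1 R1 by simp
    have normD: "norm (of_nat d * z0 ^ m :: complex) = D"
      unfolding D_def R_def by (simp add: norm_mult norm_power)
    have pb: "norm (poly p xi - of_nat d * z0^m) \<le> D / 40" if xi: "norm (xi - z0) \<le> 1" for xi
    proof -
      have "norm (poly p xi - of_nat d * z0^m) * R \<le> Kp * R^m"
        using Kp[OF _ xi] R1 leadp unfolding R_def m_def by simp
      also have "\<dots> \<le> (R / 40) * R^m" using RKp R1 by (intro mult_right_mono) auto
      also have "\<dots> = (R^m / 40) * R" by simp
      finally have "norm (poly p xi - of_nat d * z0^m) * R \<le> (R^m / 40) * R" .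
      then have "norm (poly p xi - of_nat d * z0^m) \<le> R^m / 40"
        by (rule mult_right_le_imp_le) (use R1 in simp)
      also have "\<dots> \<le> D / 40" unfolding D_def using d1 R1 by (simp add: mult_le_cancel_right1)
      finally show ?thesis .
    qed
    have inball: "z \<in> ball z0 r \<longleftrightarrow> norm (z - z0) < r" for z
      by (simp add: dist_norm norm_minus_commute)
    have Hest: "H z \<noteq> 0 \<and> norm (H z - H xi) \<le> 9/10 * norm (H z)"
      if z: "norm (z - z0) < r" and xi: "xi \<in> closed_segment z0 z" for z xi
    proof -
      have seg: "norm (xi - z0) \<le> norm (z - z0)" "norm (xi - z) \<le> norm (z - z0)"
        using dist_in_closed_segment[OF xi] by (auto simp: dist_norm norm_minus_commute)
      have z1: "norm (z - z0) \<le> 1" using z r1 by simp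
      have xi1: "norm (xi - z0) \<le> 1" using seg z1 by simp
      have qd: "norm (poly q xi - poly q z) \<le> (11/10) * A * norm (xi - z)"
      proof (rule field_differentiable_bound[of "cball z0 1" "poly q" "poly (pderiv q)"])
        show "(poly q has_field_derivative poly (pderiv q) w) (at w within cball z0 1)" for w
          by (rule DERIV_subset[OF poly_DERIV subset_UNIV])
        show "norm (poly (pderiv q) w) \<le> 11/10 * A" if "w \<in> cball z0 1" for w
          using that by (intro q'b) (simp add: dist_norm norm_minus_commute)
      qed (use z1 xi1 in \<open>auto simp: dist_norm norm_minus_commute\<close>)
      also have "\<dots> \<le> (11/10) * A * r" using seg z A1 by (intro mult_left_mono) auto
      also have "\<dots> = 11/30" using rA by (simp add: algebra_simps)
      finally have u: "norm (poly q xi - poly q z) \<le> 11/30" .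
      note ex = exp_small[OF u]
      have ex2: "norm (exp (poly q xi - poly q z) - 1) \<le> 88/150"
        using ex(2) u by linarith
      have pz: "norm (poly p z) \<ge> 39/40 * D"
        using pb[OF z1] normD norm_triangle_sub[of "of_nat d * z0^m" "poly p z"]
        by (simp add: norm_minus_commute)
      have pdiff: "norm (poly p xi - poly p z) \<le> (2/39) * norm (poly p z)"
      proof -
        have "norm (poly p xi - poly p z) \<le> norm (poly p xi - of_nat d * z0^m) + norm (poly p z - of_nat d * z0^m)"
          using norm_triangle_ineq4[of "poly p xi - of_nat d * z0^m" "poly p z - of_nat d * z0^m"] by simp
        also have "\<dots> \<le> D/20" using pb[OF z1] pb[OF xi1] by simp
        finally show ?thesis using pz by simp
      qed
      have Hxi: "H xi = poly p xi * (exp (poly q z) * exp (poly q xi - poly q z))"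
        unfolding H_def by (simp flip: exp_add)
      have "norm (H z - H xi) \<le> 9/10 * norm (H z)"
        unfolding Hxi unfolding H_def by (rule key_ineq[OF ex(1) ex2 pdiff])
      moreover have "H z \<noteq> 0" using pz D0 unfolding H_def by auto
      ultimately show ?thesis by blast
    qed
    define N where "N = (\<lambda>z. z - g z / deriv g z)"
    have FN: "newton_ext g z = Some (N z)" if "z \<in> ball z0 r" for z
      using Hest[of z z0] that inball[of z] unfolding newton_ext_def N_def dg by auto
    have contr: "norm (N z - z0) \<le> (9/10) * norm (z - z0)" if "z \<in> ball z0 r" for z
    proof -
      have z: "norm (z - z0) < r" using that inball by simp
      have Hz: "H z \<noteq> 0" using Hest[of z z0] z by auto
      have hc: "(H has_contour_integral (g (pathfinish (linepath z0 z)) - g (pathstart (linepath z0 z)))) (linepath z0 z)"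
        by (rule contour_integral_primitive[of UNIV, OF _ valid_path_linepath]) (auto simp: gder)
      then have hc': "(H has_contour_integral g z) (linepath z0 z)" using gz0 by simp
      have hd: "((\<lambda>xi. H z - H xi) has_contour_integral (H z * (z - z0) - g z)) (linepath z0 z)"
        by (rule has_contour_integral_diff[OF has_contour_integral_const_linepath hc'])
      have bd: "norm (H z * (z - z0) - g z) \<le> 9/10 * norm (H z) * norm (z - z0)"
        by (rule has_contour_integral_bound_linepath[OF hd]) (use Hest z in auto)
      have "N z - z0 = (H z * (z - z0) - g z) / H z"
        unfolding N_def dg using Hz by (simp add: field_simps)
      then have "norm (N z - z0) = norm (H z * (z - z0) - g z) / norm (H z)"
        by (simp add: norm_divide)
      also have "\<dots> \<le> (9/10 * norm (H z) * norm (z - z0)) / norm (H z)"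
        using bd by (intro divide_right_mono) auto
      also have "\<dots> = 9/10 * norm (z - z0)" using Hz by simp
      finally show ?thesis .
    qed
    show "ball z0 (1 / (3 * real (degree q) * norm z0 ^ (degree q - 1))) \<subseteq> immediate_basin (newton_ext g) z0"
      unfolding rad by (rule basin_from_contraction[OF r0 FN contr])
  qed
qed

end
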